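(* Let $\mu>0$ and $k>0$. The function $T_p:(0,x_p)\to(0,+\infty)$ defined in the context is continuous, strictly increasing, and satisfies: (i) $\displaystyle\lim_{x\to0^+}T_p(x)=\frac{k}{\mu}$; (ii) if $x_p<1$, then $\displaystyle\lim_{x\to x_p^-}T_p(x)=+\infty$.
   Context: Let $G(u)=u^3/3-u^4/4$ for $u\in[0,1]$ (a primitive of $g(u)=u^2(1-u)$). Let $y(x)=-kx^2$ for $x\in(0,1)$. If $k^2\le\mu/6$ set $x_p=1$; if $k^2>\mu/6$ let $x_p\in(0,1)$ be the unique $x\in(0,1)$ with $y(x)^2=2\mu G(x)$ (explicitly $x_p=4\mu/(6k^2+3\mu)$). For $x\in(0,x_p)$ one has $y(x)^2<2\mu G(x)$, and $m(x)$ denotes the unique number in $(0,x)$ with $2\mu G(m(x))=2\mu G(x)-y(x)^2$ (the abscissa where the level line $v^2-2\mu G(u)=\mathrm{const}$ through $(x,y(x))$ meets the $u$-axis). Define $$T_p(x)=\int_{m(x)}^{x}\frac{du}{\sqrt{y(x)^2+2\mu(G(u)-G(x))}},\qquad x\in(0,x_p),$$ i.e. the time for a solution of $u''=\mu g(u)$ starting at $(x,y(x))$ to reach the $u$-axis. *)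

theory Defs
  imports "HOL-Analysis.Analysis"
begin

definition G :: "real \<Rightarrow> real" where
  "G u = u^3/3 - u^4/4"

definition yk :: "real \<Rightarrow> real \<Rightarrow> real" where
  "yk k x = - k * x^2"

definition xp :: "real \<Rightarrow> real \<Rightarrow> real" where
  "xp mu k = (if k^2 \<le> mu/6 then 1 else 4*mu/(6*k^2 + 3*mu))"

definition mx :: "real \<Rightarrow> real \<Rightarrow> real \<Rightarrow> real" where
  "mx mu k x = (THE m. 0 < m \<and> m < x \<and> 2*mu*G m = 2*mu*G x - (yk k x)^2)"

definition Tp_integrand :: "real \<Rightarrow> real \<Rightarrow> real \<Rightarrow> real \<Rightarrow> real" where
  "Tp_integrand mu k x u = 1 / sqrt ((yk k x)^2 + 2*mu*(G u - G x))"

definition Tp :: "real \<Rightarrow> real \<Rightarrow> real \<Rightarrow> real" where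
  "Tp mu k x = integral {mx mu k x..x} (Tp_integrand mu k x)"

end

theory Submission
  imports Defs
begin

lemma aux_div: "(P::real) \<noteq> 0 \<Longrightarrow> c \<noteq> 0 \<Longrightarrow> P * (d / (P / c)) = c * d"
  by (simp add: field_simps)

lemma aux2: "x \<noteq> 0 \<Longrightarrow> a \<noteq> 0 \<Longrightarrow> c \<noteq> 0 \<Longrightarrow> m \<noteq> 0 \<Longrightarrow>
   (k::real) * x^2 / (m * ((x * a)^2 * c)) = (k / m) / (a^2 * c)"
  by (simp add: field_simps power_mult_distrib)

definition gg :: "real \<Rightarrow> real" where "gg u = u^2*(1-u)"

lemma G_deriv: "(G has_real_derivative gg u) (at u)"
  unfolding G_def gg_def
  by (auto intro!: derivative_eq_intros simp: power2_eq_square power3_eq_cube algebra_simps)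

lemma G_cont: "continuous_on S G"
  unfolding G_def by (intro continuous_intros) auto

lemma gg_pos: "0 < u \<Longrightarrow> u < 1 \<Longrightarrow> gg u > 0"
  unfolding gg_def by simp

lemma G_strict: assumes "0 \<le> a" "a < b" "b \<le> 1" shows "G a < G b"
proof (rule DERIV_pos_imp_increasing_open[OF assms(2)])
  fix x assume "a < x" "x < b"
  then show "\<exists>y. DERIV G x :> y \<and> y > 0" using assms G_deriv gg_pos by (metis le_less_trans less_le_trans)
qed (rule G_cont)

lemma G_le_iff: "0 \<le> a \<Longrightarrow> a \<le> 1 \<Longrightarrow> 0 \<le> b \<Longrightarrow> b \<le> 1 \<Longrightarrow> G a \<le> G b \<longleftrightarrow> a \<le> b"
  by (metis G_strict linorder_not_le order_le_less)

lemma G_inj: "0 \<le> a \<Longrightarrow> a \<le> 1 \<Longrightarrow> 0 \<le> b \<Longrightarrow> b \<le> 1 \<Longrightarrow> G a = G b \<longleftrightarrow> a = b"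
  by (metis G_le_iff order_antisym order_refl)

lemma G0: "G 0 = 0" and G1: "G 1 = 1/12" by (simp_all add: G_def)

lemma G_lower: "0 \<le> u \<Longrightarrow> u \<le> 1 \<Longrightarrow> u^3/12 \<le> G u"
proof -
  assume "0 \<le> u" "u \<le> 1"
  then have "u^4 \<le> u^3" by (simp add: power_decreasing)
  then show ?thesis unfolding G_def by simp
qed

lemma G_upper: "0 \<le> u \<Longrightarrow> G u \<le> u^3/3"
  unfolding G_def by simp

definition Ginv :: "real \<Rightarrow> real" where
  "Ginv z = (THE u. 0 \<le> u \<and> u \<le> 1 \<and> G u = z)"

lemma Ginv_ex: assumes "0 \<le> z" "z \<le> 1/12" shows "\<exists>u. 0 \<le> u \<and> u \<le> 1 \<and> G u = z"
  using IVT'[of G 0 z 1] assms G_cont by (simp add: G0 G1)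

lemma Ginv: assumes "0 \<le> z" "z \<le> 1/12"
  shows "0 \<le> Ginv z" "Ginv z \<le> 1" "G (Ginv z) = z"
proof -
  obtain u where u: "0 \<le> u" "u \<le> 1" "G u = z" using Ginv_ex assms by blast
  have "Ginv z = u" unfolding Ginv_def
    by (rule the_equality) (use u G_inj in auto)
  then show "0 \<le> Ginv z" "Ginv z \<le> 1" "G (Ginv z) = z" using u by auto
qed

lemma Ginv_G: "0 \<le> u \<Longrightarrow> u \<le> 1 \<Longrightarrow> Ginv (G u) = u"
  unfolding Ginv_def by (rule the_equality) (use G_inj in auto)

lemma G_img: "G ` {0..1} = {0..1/12}"
proof
  show "G ` {0..1} \<subseteq> {0..1/12}"
    using G_le_iff[of 0] G_le_iff[of _ 1] by (auto simp: G0 G1)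
  show "{0..1/12} \<subseteq> G ` {0..1}"
    using Ginv by (force intro!: image_eqI[of _ G "Ginv _"])
qed

lemma Ginv_cont: "continuous_on {0..1/12} Ginv"
  using continuous_on_inv[OF G_cont[of "{0..1}"]] Ginv_G by (simp add: G_img)

lemma Ginv_open: assumes "0 < z" "z < 1/12" shows "0 < Ginv z" "Ginv z < 1"
proof -
  have a: "0 \<le> Ginv z" "Ginv z \<le> 1" "G (Ginv z) = z" using Ginv[of z] assms by auto
  show "0 < Ginv z" using a assms G0 by (metis less_eq_real_def order.strict_iff_not)
  show "Ginv z < 1" using a assms G1 by (metis less_eq_real_def order.strict_iff_not)
qed

lemma Ginv_deriv: assumes "0 < z" "z < 1/12"
  shows "(Ginv has_real_derivative inverse (gg (Ginv z))) (at z)"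
proof (rule DERIV_inverse_function[where a=0 and b="1/12"])
  show "DERIV G (Ginv z) :> gg (Ginv z)" by (rule G_deriv)
  show "gg (Ginv z) \<noteq> 0" using gg_pos Ginv_open assms by force
  show "isCont Ginv z"
    by (rule continuous_on_interior[OF Ginv_cont]) (use assms in simp)
qed (use assms Ginv in auto)

definition Wd :: "real \<Rightarrow> real \<Rightarrow> real \<Rightarrow> real" where
  "Wd mu k x = (yk k x)^2 / (2*mu)"

definition Vf :: "real \<Rightarrow> real \<Rightarrow> real \<Rightarrow> real \<Rightarrow> real" where
  "Vf mu k x s = Ginv (G x - (1 - s^2) * Wd mu k x)"

definition phi :: "real \<Rightarrow> real \<Rightarrow> real \<Rightarrow> real \<Rightarrow> real" where
  "phi mu k x s = k * x^2 / (mu * gg (Vf mu k x s))"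

lemma key_ineq: fixes w x :: real assumes "0 < w" "w \<le> x" "x < 1"
  shows "(2*w - 3*w^2) * (4 * G w - x^3/3) < 2 * (gg w)^2"
proof (cases "w \<le> 2/3")
  case True
  have A: "0 \<le> 2*w - 3*w^2" using True assms by (simp add: power2_eq_square algebra_simps)
  have "w^3 \<le> x^3" using assms by (simp add: power_mono)
  then have B: "4 * G w - x^3/3 \<le> w^3 - w^4" unfolding G_def by simp
  have "(2*w - 3*w^2) * (4 * G w - x^3/3) \<le> (2*w - 3*w^2) * (w^3 - w^4)"
    by (rule mult_left_mono[OF B A])
  also have "\<dots> = 2 * (gg w)^2 - w^5 * (1 - w)" unfolding gg_def by algebra
  also have "\<dots> < 2 * (gg w)^2" using assms by simp
  finally show ?thesis .
next
  case False
  have A: "2*w - 3*w^2 \<le> 0" using False assms by (simp add: power2_eq_square algebra_simps)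
  have "x^3 \<le> 1" using assms by (simp add: power_le_one)
  then have B: "4 * G w - 1/3 \<le> 4 * G w - x^3/3" by simp
  have "(2*w - 3*w^2) * (4 * G w - x^3/3) \<le> (2*w - 3*w^2) * (4 * G w - 1/3)"
    by (rule mult_left_mono_neg[OF B A])
  also have "\<dots> = 2 * (gg w)^2 - w * (1-w)^3 * (3*w^2 + 3*w + 2) / 3" unfolding gg_def G_def by algebra
  also have "\<dots> < 2 * (gg w)^2" using assms by (simp add: add_pos_pos)
  finally show ?thesis .
qed

context fixes mu k :: real assumes mu: "mu > 0" and k: "k > 0"
begin

lemma xp_le1: "xp mu k \<le> 1"
  using mu k by (auto simp: xp_def field_simps)

lemma xp_pos: "xp mu k > 0"
  using mu k by (auto simp: xp_def)

lemma Wd_eq: "Wd mu k x = k^2 * x^4 / (2*mu)"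
  by (simp add: Wd_def yk_def power_mult_distrib)

lemma basic: assumes x: "x \<in> {0<..<xp mu k}"
  shows "0 < x" "x < 1" "0 < Wd mu k x" "Wd mu k x < G x"
proof -
  show "0 < x" "x < 1" using x xp_le1 by auto
  show "0 < Wd mu k x" using x mu k by (simp add: Wd_eq)
  have "x * (k^2 + mu/2) < 2*mu/3"
  proof (cases "k^2 \<le> mu/6")
    case True
    then have "x < 1" using x by (simp add: xp_def)
    have "x * (k^2 + mu/2) < 1 * (k^2 + mu/2)"
      using \<open>x < 1\<close> mu by (intro mult_strict_right_mono) (auto intro: add_nonneg_pos)
    then show ?thesis using True by simp
  next
    case False
    then have "x < 4*mu/(6*k^2 + 3*mu)" using x by (simp add: xp_def)
    moreover have "0 < 6*k^2 + 3*mu" using mu by (simp add: add_nonneg_pos)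
    ultimately have "x * (6*k^2 + 3*mu) < 4*mu"
      by (simp add: less_divide_eq)
    then show ?thesis by (simp add: algebra_simps)
  qed
  then have "x^3 * (x * (k^2 + mu/2)) < x^3 * (2*mu/3)"
    using \<open>0 < x\<close> by (intro mult_strict_left_mono) auto
  then show "Wd mu k x < G x" using mu unfolding Wd_eq G_def
    by (simp add: field_simps power_def)
qed

lemma G_lt: "0 < x \<Longrightarrow> x < 1 \<Longrightarrow> G x < 1/12"
  using G_strict[of x 1] by (simp add: G1)

lemma mx_eq: assumes x: "x \<in> {0<..<xp mu k}"
  shows "mx mu k x = Ginv (G x - Wd mu k x)" "0 < mx mu k x" "mx mu k x < x"
    "G (mx mu k x) = G x - Wd mu k x"
proof -
  note b = basic[OF x]
  let ?m = "Ginv (G x - Wd mu k x)"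
  have z: "0 < G x - Wd mu k x" "G x - Wd mu k x < 1/12" using b G_lt[of x] by auto
  have m: "0 < ?m" "?m < 1" "G ?m = G x - Wd mu k x" using Ginv_open[OF z] Ginv[of "G x - Wd mu k x"] z by auto
  have "?m < x"
    using m b G_le_iff[of x ?m] by auto
  have eq: "2*mu*G ?m = 2*mu*G x - (yk k x)^2" using m(3) mu by (simp add: Wd_def field_simps)
  show "mx mu k x = ?m" unfolding mx_def
  proof (rule the_equality)
    show "0 < ?m \<and> ?m < x \<and> 2*mu*G ?m = 2*mu*G x - (yk k x)^2" using m \<open>?m < x\<close> eq by auto
    fix m' assume "0 < m' \<and> m' < x \<and> 2*mu*G m' = 2*mu*G x - (yk k x)^2"
    then have "2*mu*G m' = 2*mu*G ?m" "0 \<le> m'" "m' \<le> 1" using eq mu b by auto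
    then have "G m' = G ?m" "0 \<le> m'" "m' \<le> 1" using mu by auto
    then show "m' = ?m" using G_inj[of m' ?m] m by auto
  qed
  then show "0 < mx mu k x" "mx mu k x < x" "G (mx mu k x) = G x - Wd mu k x"
    using m \<open>?m < x\<close> by auto
qed

lemma Vf_props: assumes x: "x \<in> {0<..<xp mu k}" and s: "0 \<le> s" "s \<le> 1"
  shows "G (Vf mu k x s) = G x - (1 - s^2) * Wd mu k x"
    "mx mu k x \<le> Vf mu k x s" "Vf mu k x s \<le> x" "0 < Vf mu k x s" "Vf mu k x s < 1"
proof -
  note b = basic[OF x]
  have s2: "0 \<le> s^2" "s^2 \<le> 1" using s by (auto simp: power_le_one)
  have le: "(1 - s^2) * Wd mu k x \<le> Wd mu k x" "0 \<le> (1 - s^2) * Wd mu k x"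
    using s2 b by (auto simp: mult_left_le_one_le)
  have z: "0 < G x - (1 - s^2) * Wd mu k x" "G x - (1 - s^2) * Wd mu k x < 1/12"
    using b G_lt[OF b(1) b(2)] le by linarith+
  show g: "G (Vf mu k x s) = G x - (1 - s^2) * Wd mu k x"
    unfolding Vf_def using Ginv z by auto
  show v: "0 < Vf mu k x s" "Vf mu k x s < 1" unfolding Vf_def using Ginv_open z by auto
  show "mx mu k x \<le> Vf mu k x s"
    using G_le_iff[of "mx mu k x" "Vf mu k x s"] mx_eq[OF x] v g le b by auto
  show "Vf mu k x s \<le> x"
    using G_le_iff[of "Vf mu k x s" x] v g le b by auto
qed

lemma arg_in: assumes x: "x \<in> {0<..<xp mu k}" and s: "0 \<le> s" "s \<le> 1"
  shows "0 \<le> G x - (1 - s^2) * Wd mu k x" "G x - (1 - s^2) * Wd mu k x \<le> 1/12"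
  using Vf_props[OF x s] G_le_iff[of 0 "Vf mu k x s"] G_le_iff[of "Vf mu k x s" 1]
  by (auto simp: G0 G1)

lemma phi_pos: assumes x: "x \<in> {0<..<xp mu k}" and s: "0 \<le> s" "s \<le> 1"
  shows "0 < mu * gg (Vf mu k x s)" "0 < phi mu k x s"
  using Vf_props[OF x s] gg_pos mu k basic[OF x] unfolding phi_def by auto

lemma phi_cont2: "continuous_on ({0<..<xp mu k} \<times> {0..1}) (\<lambda>(x,s). phi mu k x s)"
proof -
  let ?U = "{0<..<xp mu k} \<times> {0..1::real}"
  have c1: "continuous_on ?U (\<lambda>(x,s). G x - (1 - s^2) * Wd mu k x)"
    unfolding G_def Wd_eq case_prod_beta by (intro continuous_intros) (use mu in auto)
  have c2: "continuous_on ?U (\<lambda>(x,s). Vf mu k x s)"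
    unfolding Vf_def
    using continuous_on_compose2[OF Ginv_cont c1] arg_in by (force simp: case_prod_beta)
  have c2': "continuous_on ?U (\<lambda>p. Vf mu k (fst p) (snd p))" using c2 by (simp add: case_prod_beta)
  have c3: "continuous_on ?U (\<lambda>(x,s). mu * gg (Vf mu k x s))"
    unfolding gg_def case_prod_beta by (intro continuous_intros c2')
  have c3': "continuous_on ?U (\<lambda>p. mu * gg (Vf mu k (fst p) (snd p)))" using c3 by (simp add: case_prod_beta)
  have "continuous_on ?U (\<lambda>p. k * (fst p)^2 / (mu * gg (Vf mu k (fst p) (snd p))))"
  proof (rule continuous_on_divide[OF _ c3'])
    show "continuous_on ?U (\<lambda>p. k * (fst p)^2)" by (intro continuous_intros)
    show "\<forall>p\<in>?U. mu * gg (Vf mu k (fst p) (snd p)) \<noteq> 0"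
    proof
      fix p assume "p \<in> ?U"
      then have "0 < mu * gg (Vf mu k (fst p) (snd p))" using phi_pos(1)[of "fst p" "snd p"]
        by (auto simp: mem_Times_iff)
      then show "mu * gg (Vf mu k (fst p) (snd p)) \<noteq> 0" by (metis less_irrefl)
    qed
  qed
  then have "continuous_on ?U (\<lambda>(x,s). k * x^2 / (mu * gg (Vf mu k x s)))"
    by (simp add: case_prod_beta)
  then show ?thesis unfolding phi_def .
qed

lemma phi_cont: assumes x: "x \<in> {0<..<xp mu k}" shows "continuous_on {0..1} (phi mu k x)"
proof -
  have "continuous_on {0..1} ((\<lambda>(x,s). phi mu k x s) \<circ> (\<lambda>s. (x, s)))"
    by (rule continuous_on_compose[OF _ continuous_on_subset[OF phi_cont2]])
       (use x in \<open>auto intro!: continuous_intros\<close>)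
  then show ?thesis by (simp add: o_def)
qed

lemma Tp_repr: assumes x: "x \<in> {0<..<xp mu k}"
  and f': "\<And>u. u \<in> {mx mu k x<..<x} \<Longrightarrow> f' u = Tp_integrand mu k x u"
  shows "(f' has_integral integral {0..1} (phi mu k x)) {mx mu k x..x}"
proof -
  note b = basic[OF x] and m = mx_eq[OF x]
  define W where "W = Wd mu k x"
  define M where "M = mx mu k x"
  define S where "S u = sqrt ((G u - G M) / W)" for u
  define Phi where "Phi t = integral {0..t} (phi mu k x)" for t
  have W: "0 < W" using b W_def by auto
  have GM: "G M = G x - W" using m M_def W_def by auto
  have M: "0 < M" "M < x" using m M_def by auto
  have Sin: "0 \<le> S u \<and> S u \<le> 1" if "u \<in> {M..x}" for u
  proof -
    have "G M \<le> G u" "G u \<le> G x" using that G_le_iff[of M u] G_le_iff[of u x] M b by auto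
    then have "0 \<le> (G u - G M) / W" "(G u - G M) / W \<le> 1" using W GM by auto
    then show ?thesis unfolding S_def by auto
  qed
  have Sin2: "0 < S u \<and> S u < 1 \<and> 0 < (G u - G M) / W" if "u \<in> {M<..<x}" for u
  proof -
    have "G M < G u" "G u < G x" using that G_strict[of M u] G_strict[of u x] M b by auto
    then have "0 < (G u - G M) / W" "(G u - G M) / W < 1" using W GM by auto
    then show ?thesis unfolding S_def by auto
  qed
  have Scont: "continuous_on {M..x} S" unfolding S_def G_def by (intro continuous_intros) (use W in auto)
  have Phicont: "continuous_on {0..1} Phi" unfolding Phi_def
    by (rule indefinite_integral_continuous_1, rule integrable_continuous_real, rule phi_cont[OF x])
  have Fcont: "continuous_on {M..x} (\<lambda>u. Phi (S u))"
  proof -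
    have "S ` {M..x} \<subseteq> {0..1}" using Sin by auto
    then show ?thesis using continuous_on_compose2[OF Phicont Scont] by auto
  qed
  have Fder: "((\<lambda>u. Phi (S u)) has_vector_derivative f' u) (at u)" if u: "u \<in> {M<..<x}" for u
  proof -
    note su = Sin2[OF u]
    have d1: "(Phi has_real_derivative phi mu k x (S u)) (at (S u))"
      using integral_has_real_derivative[OF phi_cont[OF x], of "S u"] su
      unfolding Phi_def by (simp add: at_within_Icc_at)
    have d2: "(S has_real_derivative (gg u / W) * (inverse (sqrt ((G u - G M) / W)) / 2)) (at u)"
    proof -
      have dq: "((\<lambda>u. (G u - G M) / W) has_real_derivative gg u / W) (at u)"
        using W by (auto intro!: derivative_eq_intros G_deriv)
      show ?thesis unfolding S_def
        using DERIV_chain2[OF DERIV_real_sqrt[OF conjunct2[OF conjunct2[OF su]]] dq]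
        by (simp add: mult.commute)
    qed
    have V: "Vf mu k x (S u) = u"
    proof -
      have "(S u)^2 = (G u - G M) / W" unfolding S_def using su by simp
      then have "G (Vf mu k x (S u)) = G u"
        using Vf_props(1)[OF x, of "S u"] su GM W unfolding W_def by (simp add: field_simps)
      then show ?thesis using G_inj[of "Vf mu k x (S u)" u] Vf_props[OF x, of "S u"] su u M b
        by auto
    qed
    have val: "phi mu k x (S u) * ((gg u / W) * (inverse (sqrt ((G u - G M) / W)) / 2))
        = Tp_integrand mu k x u"
    proof -
      have gu: "gg u > 0" using gg_pos u M b by auto
      have q: "0 < (G u - G M) / W" using su by auto
      have y2: "(yk k x)^2 = 2*mu*W" unfolding W_def Wd_def using mu by simp
      have Weq: "W = (k*x^2)^2/(2*mu)" unfolding W_def Wd_eq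
        by (simp add: power_mult_distrib power_mult[symmetric])
      have kx: "(k*x^2)^2 > 0" using k b by simp
      have e1a: "(yk k x)^2 + 2*mu*(G u - G x) = 2*mu*(G u - G M)" unfolding y2 GM by (simp add: algebra_simps)
      have e1b: "2*mu*(G u - G M) = (k*x^2)^2 * ((G u - G M) / W)"
        unfolding Weq using kx mu aux_div[of "(k*x^2)^2" "2*mu" "G u - G M"] by simp
      have e1: "(yk k x)^2 + 2*mu*(G u - G x) = (k*x^2)^2 * ((G u - G M) / W)"
        using e1a e1b by simp
      have e2: "sqrt ((yk k x)^2 + 2*mu*(G u - G x)) = k*x^2 * sqrt ((G u - G M) / W)"
        unfolding e1 real_sqrt_mult using k b by simp
      show ?thesis unfolding Tp_integrand_def e2 phi_def V
        using gu q W mu k b unfolding W_def Wd_eq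
        by (simp add: field_simps power2_eq_square power4_eq_xxxx)
    qed
    show ?thesis
      using DERIV_chain2[OF d1 d2] val f'[of u] u M_def
      by (simp add: has_real_derivative_iff_has_vector_derivative)
  qed
  have "(f' has_integral (Phi (S x) - Phi (S M))) {M..x}"
    by (rule fundamental_theorem_of_calculus_interior[OF _ Fcont Fder]) (use M in auto)
  moreover have "S x = 1" "S M = 0" unfolding S_def using GM W by auto
  ultimately show ?thesis unfolding Phi_def M_def by simp
qed

lemma phi_strict: assumes x1: "x1 \<in> {0<..<xp mu k}" and x2: "x2 \<in> {0<..<xp mu k}"
  and lt: "x1 < x2" and s: "0 \<le> s" "s \<le> 1"
  shows "phi mu k x1 s < phi mu k x2 s"
proof (rule DERIV_pos_imp_increasing[OF lt])
  fix x assume "x1 \<le> x" "x \<le> x2"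
  then have x: "x \<in> {0<..<xp mu k}" using x1 x2 by auto
  note b = basic[OF x] and vp = Vf_props[OF x s]
  define V where "V = Vf mu k x s"
  define D where "D = gg V"
  define z' where "z' = gg x - (1 - s^2) * (2 * k^2 * x^3 / mu)"
  have V: "0 < V" "V \<le> x" "V < 1" "G V = G x - (1 - s^2) * Wd mu k x" using vp V_def by auto
  have D: "0 < D" using gg_pos V D_def by auto
  have zin: "0 < G x - (1 - s^2) * Wd mu k x" "G x - (1 - s^2) * Wd mu k x < 1/12"
    using V G_strict[of 0 V] G_strict[of V 1] by (auto simp: G0 G1)
  have dz: "((\<lambda>x. G x - (1 - s^2) * Wd mu k x) has_real_derivative z') (at x)"
    unfolding Wd_eq z'_def using mu
    by (auto intro!: derivative_eq_intros G_deriv simp: field_simps)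
  have dV: "((\<lambda>x. Vf mu k x s) has_real_derivative inverse D * z') (at x)"
    unfolding Vf_def using DERIV_chain2[OF Ginv_deriv[OF zin] dz] V_def D_def Vf_def by simp
  have dg: "(gg has_real_derivative (2*V - 3*V^2)) (at V)"
    unfolding gg_def by (auto intro!: derivative_eq_intros simp: algebra_simps power2_eq_square)
  have dD: "((\<lambda>x. mu * gg (Vf mu k x s)) has_real_derivative mu * ((2*V - 3*V^2) * (inverse D * z'))) (at x)"
    using DERIV_chain2[OF dg[unfolded V_def] dV] unfolding V_def
    by (auto intro!: derivative_eq_intros)
  have dN: "((\<lambda>x. k * x^2) has_real_derivative k * (2 * x)) (at x)"
    by (auto intro!: derivative_eq_intros)
  have dphi: "((\<lambda>x. phi mu k x s) has_real_derivative
      (k * (2*x) * (mu * D) - k * x^2 * (mu * ((2*V - 3*V^2) * (inverse D * z')))) / (mu * D)^2) (at x)"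
  proof -
    have "mu * gg (Vf mu k x s) \<noteq> 0" using D mu unfolding D_def V_def by simp
    from DERIV_quotient[OF dN dD this] show ?thesis
      unfolding phi_def D_def V_def by (simp add: mult.commute power2_eq_square)
  qed
  have xz: "x * z' = 4 * G V - x^3/3"
    unfolding V(4) unfolding z'_def G_def Wd_eq gg_def using mu by (simp add: field_simps power_def)
  have key: "(2*V - 3*V^2) * (x * z') < 2 * D^2"
    unfolding xz D_def by (rule key_ineq) (use V b in auto)
  have "0 < (k * (2*x) * (mu * D) - k * x^2 * (mu * ((2*V - 3*V^2) * (inverse D * z'))))"
  proof -
    have "k * (2*x) * (mu * D) - k * x^2 * (mu * ((2*V - 3*V^2) * (inverse D * z')))
        = (k * mu * x / D) * (2 * D^2 - (2*V - 3*V^2) * (x * z'))"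
      using D by (simp add: field_simps power2_eq_square)
    also have "\<dots> > 0" using key k mu b D by (intro mult_pos_pos divide_pos_pos) auto
    finally show ?thesis .
  qed
  then show "\<exists>y. ((\<lambda>x. phi mu k x s) has_real_derivative y) (at x) \<and> 0 < y"
    using dphi D mu by (intro exI[of _ "(k * (2*x) * (mu * D) - k * x^2 * (mu * ((2*V - 3*V^2) * (inverse D * z')))) / (mu * D)^2"]) auto
qed

lemma Tp_eq: assumes x: "x \<in> {0<..<xp mu k}"
  shows "Tp_integrand mu k x integrable_on {mx mu k x..x}" "Tp mu k x = integral {0..1} (phi mu k x)"
proof -
  have h: "(Tp_integrand mu k x has_integral integral {0..1} (phi mu k x)) {mx mu k x..x}"
    by (rule Tp_repr[OF x]) auto
  then show "Tp_integrand mu k x integrable_on {mx mu k x..x}" by blast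
  show "Tp mu k x = integral {0..1} (phi mu k x)" unfolding Tp_def using h by (rule integral_unique)
qed

lemma Tp_pos: assumes x: "x \<in> {0<..<xp mu k}" shows "Tp mu k x > 0"
proof -
  have "integral {0..1} (\<lambda>_. 0::real) < integral {0..1} (phi mu k x)"
    using integral_less_real[of 0 1 "\<lambda>_. 0" "phi mu k x"] phi_cont[OF x] phi_pos[OF x] by auto
  then show ?thesis using Tp_eq[OF x] by simp
qed

lemma Tp_cont: "continuous_on {0<..<xp mu k} (Tp mu k)"
proof -
  have "continuous_on {0<..<xp mu k} (\<lambda>x. integral (cbox 0 1) (phi mu k x))"
    by (rule integral_continuous_on_param) (use phi_cont2 in \<open>simp add: cbox_interval\<close>)
  then show ?thesis
    by (rule continuous_on_cong[THEN iffD1, rotated 2]) (auto simp: Tp_eq cbox_interval)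
qed

lemma Tp_mono: "strict_mono_on {0<..<xp mu k} (Tp mu k)"
proof (rule strict_mono_onI)
  fix r t assume r: "r \<in> {0<..<xp mu k}" and t: "t \<in> {0<..<xp mu k}" and "r < t"
  have "integral {0..1} (phi mu k r) < integral {0..1} (phi mu k t)"
    by (rule integral_less_real) (use phi_cont[OF r] phi_cont[OF t] phi_strict[OF r t \<open>r < t\<close>] in auto)
  then show "Tp mu k r < Tp mu k t" using Tp_eq[OF r] Tp_eq[OF t] by simp
qed

definition CC :: "real \<Rightarrow> real \<Rightarrow> real" where "CC m' k' = 3/4 + 3*k'^2/(2*m')"

lemma CC_pos: "CC mu k > 0" unfolding CC_def using mu by (simp add: add_pos_nonneg)

lemma mx_lower: assumes x: "x \<in> {0<..<xp mu k}" shows "x * (1 - CC mu k * x) \<le> mx mu k x"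
proof -
  note b = basic[OF x] and m = mx_eq[OF x]
  define M where "M = mx mu k x"
  have M: "0 < M" "M < x" "G M = G x - Wd mu k x" using m M_def by auto
  have "x^3 * (1 - CC mu k * x) = 3 * (G x - Wd mu k x)"
    unfolding CC_def G_def Wd_eq using mu by (simp add: field_simps power_def)
  also have "\<dots> = 3 * G M" using M by simp
  also have "\<dots> \<le> M^3" using G_upper[of M] M by simp
  also have "\<dots> \<le> M * x^2"
  proof -
    have "M^2 \<le> x^2" using M by (simp add: power_mono)
    then show ?thesis using M by (simp add: power3_eq_cube power2_eq_square mult_left_mono)
  qed
  finally have "x^2 * (x * (1 - CC mu k * x)) \<le> x^2 * M"
    by (simp add: power3_eq_cube power2_eq_square algebra_simps)
  then show ?thesis using b M_def by simp
qed

lemma phi_bounds: assumes x: "x \<in> {0<..<xp mu k}" and cx: "CC mu k * x < 1"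
  and s: "0 \<le> s" "s \<le> 1"
  shows "k / mu \<le> phi mu k x s" "phi mu k x s \<le> (k/mu) / ((1 - CC mu k * x)^2 * (1 - x))"
proof -
  note b = basic[OF x] and vp = Vf_props[OF x s]
  define V where "V = Vf mu k x s"
  have V: "0 < V" "V \<le> x" "V < 1" "mx mu k x \<le> V" using vp V_def by auto
  have gpos: "0 < gg V" using V gg_pos by auto
  have "gg V \<le> x^2"
  proof -
    have "gg V \<le> V^2" unfolding gg_def using V by (simp add: mult_left_le_one_le)
    also have "\<dots> \<le> x^2" using V by (simp add: power_mono)
    finally show ?thesis .
  qed
  then have "k * x^2 / (mu * x^2) \<le> k * x^2 / (mu * gg V)"
    using gpos mu k b by (intro divide_left_mono mult_left_mono mult_pos_pos) auto
  then show "k / mu \<le> phi mu k x s" unfolding phi_def V_def using b by simp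
  have lowV: "x * (1 - CC mu k * x) \<le> V" using mx_lower[OF x] V by linarith
  have p1: "0 < x * (1 - CC mu k * x)" using cx b by simp
  have "(x * (1 - CC mu k * x))^2 * (1 - x) \<le> gg V"
    unfolding gg_def using lowV p1 V b
    by (intro mult_mono power_mono) auto
  then have "k * x^2 / (mu * gg V) \<le> k * x^2 / (mu * ((x * (1 - CC mu k * x))^2 * (1 - x)))"
    using gpos mu k b p1 by (intro divide_left_mono mult_left_mono mult_pos_pos) auto
  also have "\<dots> = (k/mu) / ((1 - CC mu k * x)^2 * (1 - x))"
    by (rule aux2) (use b mu p1 in auto)
  finally show "phi mu k x s \<le> (k/mu) / ((1 - CC mu k * x)^2 * (1 - x))" unfolding phi_def V_def .
qed

lemma lim0: "(Tp mu k \<longlongrightarrow> k / mu) (at_right 0)"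
proof (rule tendsto_sandwich)
  define b where "b = min (xp mu k) (1 / CC mu k)"
  have b: "0 < b" unfolding b_def using xp_pos CC_pos by simp
  have ev: "eventually (\<lambda>x. x \<in> {0<..<b}) (at_right 0)" by (rule eventually_at_right_real[OF b])
  have xin: "x \<in> {0<..<xp mu k}" and cx: "CC mu k * x < 1" if "x \<in> {0<..<b}" for x
    using that CC_pos by (auto simp: b_def field_simps)
  show "eventually (\<lambda>x. k / mu \<le> Tp mu k x) (at_right 0)"
    using ev
  proof (rule eventually_mono)
    fix x assume "x \<in> {0<..<b}"
    note xx = xin[OF this] cx[OF this]
    have "integral {0..1} (\<lambda>_::real. k / mu) \<le> integral {0..1} (phi mu k x)"
      by (rule Henstock_Kurzweil_Integration.integral_le) (use phi_cont[OF xx(1)] phi_bounds[OF xx] in \<open>auto intro: integrable_continuous_real\<close>)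
    then show "k / mu \<le> Tp mu k x" using Tp_eq[OF xx(1)] by simp
  qed
  show "eventually (\<lambda>x. Tp mu k x \<le> (k/mu) / ((1 - CC mu k * x)^2 * (1 - x))) (at_right 0)"
    using ev
  proof (rule eventually_mono)
    fix x assume "x \<in> {0<..<b}"
    note xx = xin[OF this] cx[OF this]
    have "integral {0..1} (phi mu k x) \<le> integral {0..1} (\<lambda>_::real. (k/mu) / ((1 - CC mu k * x)^2 * (1 - x)))"
    proof (rule Henstock_Kurzweil_Integration.integral_le)
      show "phi mu k x integrable_on {0..1}" using phi_cont[OF xx(1)] by (rule integrable_continuous_real)
    qed (use phi_bounds[OF xx] in auto)
    then show "Tp mu k x \<le> (k/mu) / ((1 - CC mu k * x)^2 * (1 - x))" using Tp_eq[OF xx(1)] by simp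
  qed
  show "((\<lambda>x. k / mu) \<longlongrightarrow> k / mu) (at_right 0)" by simp
  have "((\<lambda>x. (k/mu) / ((1 - CC mu k * x)^2 * (1 - x))) \<longlongrightarrow> (k/mu) / ((1 - CC mu k * 0)^2 * (1 - 0))) (at_right 0)"
    by (intro tendsto_intros) auto
  then show "((\<lambda>x. (k/mu) / ((1 - CC mu k * x)^2 * (1 - x))) \<longlongrightarrow> k / mu) (at_right 0)" by simp
qed


lemma Tp_lower: assumes x: "x \<in> {0<..<xp mu k}"
  shows "2 * inverse (sqrt (2*mu/3)) * (inverse (sqrt (mx mu k x)) - inverse (sqrt x)) \<le> Tp mu k x"
proof -
  note b = basic[OF x] and m = mx_eq[OF x]
  define M where "M = mx mu k x"
  define K where "K = inverse (sqrt (2*mu/3))"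
  define L where "L u = 1 / sqrt (2*mu*u^3/3)" for u
  have M: "0 < M" "M < x" "G M = G x - Wd mu k x" using m M_def by auto
  have K: "K > 0" unfolding K_def using mu by simp
  have Lform: "L u = K / (u * sqrt u)" if "u > 0" for u
  proof -
    have "sqrt (2*mu*u^3/3) = sqrt (2*mu/3) * (u * sqrt u)"
    proof -
      have e: "2*mu*u^3/3 = (2*mu/3) * (u^2 * u)" by (simp add: power2_eq_square power3_eq_cube)
      show ?thesis unfolding e real_sqrt_mult real_sqrt_abs using that by simp
    qed
    then show ?thesis unfolding L_def K_def using that mu by (simp add: field_simps)
  qed
  have intL: "(L has_integral ((- 2*K / sqrt x) - (- 2*K / sqrt M))) {M..x}"
  proof (rule fundamental_theorem_of_calculus)
    show "M \<le> x" using M by simp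
    fix u assume u: "u \<in> {M..x}"
    then have up: "u > 0" using M by auto
    have "((\<lambda>u. - 2*K / sqrt u) has_real_derivative L u) (at u)"
      using up K by (auto intro!: derivative_eq_intros simp: Lform[OF up] field_simps)
    then show "((\<lambda>u. - 2*K / sqrt u) has_vector_derivative L u) (at u within {M..x})"
      by (simp add: has_real_derivative_iff_has_vector_derivative has_vector_derivative_at_within)
  qed
  define f2 where "f2 u = (if u = M then L M else Tp_integrand mu k x u)" for u
  have int2: "(f2 has_integral integral {0..1} (phi mu k x)) {M..x}"
    unfolding M_def by (rule Tp_repr[OF x]) (auto simp: f2_def M_def)
  have le: "L u \<le> f2 u" if u: "u \<in> {M..x}" for u
  proof (cases "u = M")
    case True then show ?thesis by (simp add: f2_def)
  next
    case False
    then have u': "M < u" "u \<le> x" using u by auto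
    have GMu: "G M < G u" using G_strict[of M u] u' M b by auto
    have R: "(yk k x)^2 + 2*mu*(G u - G x) = 2*mu*(G u - G M)"
    proof -
      have y2: "(yk k x)^2 = 2*mu*Wd mu k x" unfolding Wd_def using mu by simp
      show ?thesis unfolding y2 M(3) by (simp add: algebra_simps)
    qed
    have Rpos: "0 < 2*mu*(G u - G M)" using GMu mu by simp
    have GM0: "0 \<le> G M"
    proof -
      have "0 \<le> M^3/12" using M by simp
      also have "\<dots> \<le> G M" using G_lower[of M] M b by simp
      finally show ?thesis .
    qed
    have "G u \<le> u^3/3" using G_upper[of u] u' M by simp
    then have "G u - G M \<le> u^3/3" using GM0 by linarith
    then have "2*mu*(G u - G M) \<le> 2*mu*u^3/3" using mu by simp
    then have "sqrt (2*mu*(G u - G M)) \<le> sqrt (2*mu*u^3/3)" by simp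
    then have "1 / sqrt (2*mu*u^3/3) \<le> 1 / sqrt (2*mu*(G u - G M))"
      using Rpos by (intro divide_left_mono) auto
    then show ?thesis unfolding f2_def L_def Tp_integrand_def R using False by simp
  qed
  have "(- 2*K / sqrt x) - (- 2*K / sqrt M) \<le> integral {0..1} (phi mu k x)"
    by (rule has_integral_le[OF intL int2]) (use le in auto)
  moreover have "2*K*(inverse (sqrt M) - inverse (sqrt x)) = (- 2*K / sqrt x) - (- 2*K / sqrt M)"
    by (simp add: divide_inverse algebra_simps)
  ultimately have "2*K*(inverse (sqrt M) - inverse (sqrt x)) \<le> Tp mu k x" using Tp_eq[OF x] by simp
  then show ?thesis unfolding M_def K_def .
qed

lemma limxp: assumes lt: "xp mu k < 1" shows "filterlim (Tp mu k) at_top (at_left (xp mu k))"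
proof -
  define p where "p = xp mu k"
  have pv: "p = 4*mu/(6*k^2 + 3*mu)" using lt unfolding p_def xp_def by (auto split: if_splits)
  have p0: "0 < p" using xp_pos p_def by simp
  define P where "P x = G x - Wd mu k x" for x
  have Pp: "P p = 0"
  proof -
    have d: "6*k^2 + 3*mu > 0" using mu by (simp add: add_nonneg_pos)
    show ?thesis unfolding P_def G_def Wd_eq pv using d mu by (simp add: field_simps) algebra
  qed
  have ev: "eventually (\<lambda>x. x \<in> {0<..<p}) (at_left p)" by (rule eventually_at_left_real[OF p0])
  have mbound: "mx mu k x \<le> root 3 (12 * P x) \<and> 0 < mx mu k x" if x: "x \<in> {0<..<p}" for x
  proof -
    have xx: "x \<in> {0<..<xp mu k}" using x p_def by simp
    note m = mx_eq[OF xx] and b = basic[OF xx]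
    have "(mx mu k x)^3 \<le> 12 * P x" using G_lower[of "mx mu k x"] m b unfolding P_def by simp
    then have r1: "root 3 ((mx mu k x)^3) \<le> root 3 (12 * P x)" by simp
    have r2: "root 3 ((mx mu k x)^3) = mx mu k x" by (rule real_root_power_cancel) (use m(2) in auto)
    show ?thesis using r1 r2 m(2) by linarith
  qed
  have Pt: "(P \<longlongrightarrow> P p) (at_left p)"
    unfolding P_def G_def Wd_eq by (intro tendsto_intros) (use mu in auto)
  have mt: "((\<lambda>x. mx mu k x) \<longlongrightarrow> 0) (at_left p)"
  proof (rule tendsto_sandwich[of "\<lambda>_. 0" _ _ "\<lambda>x. root 3 (12 * P x)"])
    show "eventually (\<lambda>x. 0 \<le> mx mu k x) (at_left p)"
      using ev by (rule eventually_mono) (use mbound in force)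
    show "eventually (\<lambda>x. mx mu k x \<le> root 3 (12 * P x)) (at_left p)"
      using ev by (rule eventually_mono) (use mbound in force)
    have "((\<lambda>x. root 3 (12 * P x)) \<longlongrightarrow> root 3 (12 * P p)) (at_left p)"
      by (intro tendsto_intros Pt)
    then show "((\<lambda>x. root 3 (12 * P x)) \<longlongrightarrow> 0) (at_left p)" using Pp by simp
  qed simp
  have st: "filterlim (\<lambda>x. sqrt (mx mu k x)) (at_right 0) (at_left p)"
  proof (rule tendsto_imp_filterlim_at_right)
    show "((\<lambda>x. sqrt (mx mu k x)) \<longlongrightarrow> 0) (at_left p)" using tendsto_real_sqrt[OF mt] by simp
    show "eventually (\<lambda>x. sqrt (mx mu k x) > 0) (at_left p)"
      using ev by (rule eventually_mono) (use mbound in force)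
  qed
  have inv: "filterlim (\<lambda>x. inverse (sqrt (mx mu k x))) at_top (at_left p)"
    by (rule filterlim_compose[OF filterlim_inverse_at_top_right st])
  have t2: "((\<lambda>x. - inverse (sqrt x)) \<longlongrightarrow> - inverse (sqrt p)) (at_left p)"
    using p0 by (intro tendsto_intros) auto
  have sum: "filterlim (\<lambda>x. - inverse (sqrt x) + inverse (sqrt (mx mu k x))) at_top (at_left p)"
    by (rule filterlim_tendsto_add_at_top[OF t2 inv])
  have K: "0 < 2 * inverse (sqrt (2*mu/3))" using mu by simp
  have prod: "filterlim (\<lambda>x. 2 * inverse (sqrt (2*mu/3)) * (- inverse (sqrt x) + inverse (sqrt (mx mu k x)))) at_top (at_left p)"
    by (rule filterlim_tendsto_pos_mult_at_top[OF tendsto_const K sum])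
  show ?thesis unfolding p_def[symmetric]
  proof (rule filterlim_at_top_mono[OF prod])
    show "eventually (\<lambda>x. 2 * inverse (sqrt (2*mu/3)) * (- inverse (sqrt x) + inverse (sqrt (mx mu k x))) \<le> Tp mu k x) (at_left p)"
      using ev by (rule eventually_mono) (use Tp_lower p_def in force)
  qed
qed

end

theorem proposition3p1:
  fixes mu k :: real
  assumes "mu > 0" and "k > 0"
  shows "(\<forall>x\<in>{0<..<xp mu k}. Tp_integrand mu k x integrable_on {mx mu k x..x} \<and> Tp mu k x > 0)
    \<and> continuous_on {0<..<xp mu k} (Tp mu k)
    \<and> strict_mono_on {0<..<xp mu k} (Tp mu k)
    \<and> (Tp mu k \<longlongrightarrow> k / mu) (at_right 0)
    \<and> (xp mu k < 1 \<longrightarrow> filterlim (Tp mu k) at_top (at_left (xp mu k)))"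
  using Tp_eq[OF assms] Tp_pos[OF assms] Tp_cont[OF assms] Tp_mono[OF assms] lim0[OF assms] limxp[OF assms]
  by blast

end
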